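(* For all integers $m\geq1$ and $n\geq0$, \[ \int_0^\infty\frac{\sum_{j=0}^{n+1}\binom{n+1}{j}L_{4m(n+1-j)}x^{2j}}{(x^4+L_{4m}x^2+1)^{n+1}}\ln x\,dx=-\binom{2n}{n}\frac{\pi}{2^{2n+1}}\Bigl(2m\sqrt5\,F_{2m(2n+1)}\ln\alpha+O_nL_{2m(2n+1)}\Bigr) \] and \[ \int_0^\infty\frac{\sum_{j=0}^{n+1}\binom{n+1}{j}F_{4m(n+1-j)}x^{2j}}{(x^4+L_{4m}x^2+1)^{n+1}}\ln x\,dx=-\binom{2n}{n}\frac{\pi}{2^{2n+1}}\Bigl(\frac{2m}{\sqrt5}L_{2m(2n+1)}\ln\alpha+O_nF_{2m(2n+1)}\Bigr). \]
   Context: $O_n=\sum_{j=1}^n\frac1{2j-1}$ ($O_0=0$). $F_n$ and $L_n$ are the Fibonacci and Lucas numbers ($F_0=0,F_1=1$, $L_0=2,L_1=1$, $u_n=u_{n-1}+u_{n-2}$), and $\alpha=(1+\sqrt5)/2$. *)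

theory Defs
  imports "HOL-Analysis.Analysis" "HOL-Number_Theory.Fib"
begin

fun lucas :: "nat \<Rightarrow> nat" where
  "lucas 0 = 2"
| "lucas (Suc 0) = 1"
| "lucas (Suc (Suc n)) = lucas (Suc n) + lucas n"

definition oddharm :: "nat \<Rightarrow> real" where
  "oddharm n = (\<Sum>j=1..n. 1 / (2 * real j - 1))"

definition golden :: real where
  "golden = (1 + sqrt 5) / 2"

end

theory Submission
  imports Defs "HOL-Real_Asymp.Real_Asymp"
begin


lemma improper_ftc:
  fixes G g :: "real \<Rightarrow> real"
  assumes deriv: "\<And>x. x > 0 \<Longrightarrow> (G has_real_derivative g x) (at x)"
    and A: "(G \<longlongrightarrow> A) (at_right 0)" and B: "(G \<longlongrightarrow> B) at_top"
  shows "(g has_integral (B - A)) {0<..}"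
proof -
  define H where "H x = (if x \<le> 0 then A else G x)" for x
  define gg where "gg x = (if x \<in> {0<..} then g x else 0)" for x :: real
  have dH: "(H has_real_derivative gg x) (at x)" if "x \<noteq> 0" for x
  proof (cases "x > 0")
    case True
    have "(H has_real_derivative g x) (at x)"
      by (rule has_field_derivative_transform_within_open[OF deriv[OF True], of "{0<..}"])
         (use True in \<open>auto simp: H_def\<close>)
    then show ?thesis using True by (simp add: gg_def)
  next
    case False
    with that have "x < 0" by simp
    have "(H has_real_derivative 0) (at x)"
      by (rule has_field_derivative_transform_within_open[OF DERIV_const[of A "at x"], of "{..<0}"])
         (use \<open>x < 0\<close> in \<open>auto simp: H_def\<close>)
    then show ?thesis using \<open>x < 0\<close> by (simp add: gg_def)
  qed
  have contH: "isCont H x" for x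
  proof (cases "x = 0")
    case True
    have l: "(H \<longlongrightarrow> A) (at_left 0)"
    proof (rule tendsto_eventually)
      show "\<forall>\<^sub>F y in at_left (0::real). H y = A"
        by (rule eventually_at_leftI[of "-1"]) (auto simp: H_def)
    qed
    have r: "(H \<longlongrightarrow> A) (at_right 0)"
    proof (rule Lim_transform_eventually[OF A])
      show "\<forall>\<^sub>F y in at_right (0::real). G y = H y"
        using eventually_at_right_less[of "0::real"] by eventually_elim (auto simp: H_def)
    qed
    have "H 0 = A" by (simp add: H_def)
    then show ?thesis using l r True
      by (simp add: isCont_def filterlim_split_at)
  next
    case False
    then show ?thesis using dH DERIV_isCont by blast
  qed
  have int: "(gg has_integral (H b - H a)) {a..b}" if "a \<le> b" for a b
    apply (rule fundamental_theorem_of_calculus_strong[of "{0}"])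
    using that dH contH
    by (auto simp: has_real_derivative_iff_has_vector_derivative[symmetric]
        intro!: continuous_at_imp_continuous_on)
  have nc: "\<not> (\<exists>a b. {0<..} = cbox a (b::real))"
  proof
    assume "\<exists>a b. {0<..} = cbox a (b::real)"
    then obtain a b where ab: "{0<..} = {a..(b::real)}" by auto
    have "max b 1 + 1 \<in> {0<..}" by simp
    then have "max b 1 + 1 \<in> {a..b}" by (simp only: ab)
    then show False by (simp add: max_def split: if_splits)
  qed
  show ?thesis
  proof (subst has_integral_alt, subst if_not_P[OF nc], intro allI impI)
    fix e :: real assume "e > 0"
    have "eventually (\<lambda>b. dist (G b) B < e) at_top"
      using B \<open>e > 0\<close> by (rule tendstoD)
    then obtain M where M: "\<And>b. b \<ge> M \<Longrightarrow> dist (G b) B < e"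
      unfolding eventually_at_top_linorder by blast
    show "\<exists>R>0. \<forall>a b. ball 0 R \<subseteq> cbox a b \<longrightarrow>
          (\<exists>z. ((\<lambda>x. if x \<in> {0<..} then g x else 0) has_integral z) (cbox a b) \<and> norm (z - (B - A)) < e)"
    proof (rule exI[of _ "\<bar>M\<bar> + 1"], intro conjI allI impI)
      fix a b :: real assume sub: "ball 0 (\<bar>M\<bar> + 1) \<subseteq> cbox a b"
      have "\<bar>M\<bar> + 1/2 \<in> ball 0 (\<bar>M\<bar> + 1)" "-(\<bar>M\<bar> + 1/2) \<in> ball 0 (\<bar>M\<bar> + 1)" by auto
      then have "\<bar>M\<bar> + 1/2 \<in> {a..b}" "-(\<bar>M\<bar> + 1/2) \<in> {a..b}" using sub by (simp_all only: cbox_interval[symmetric]) blast+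
      then have ab: "a \<le> -(\<bar>M\<bar> + 1/2)" "\<bar>M\<bar> + 1/2 \<le> b" by auto
      have "(gg has_integral (H b - H a)) (cbox a b)" using int ab by simp
      moreover have "H b - H a = G b - A" using ab by (auto simp: H_def)
      moreover have "norm (G b - A - (B - A)) < e" using M[of b] ab by (auto simp: dist_real_def)
      ultimately show "\<exists>z. ((\<lambda>x. if x \<in> {0<..} then g x else 0) has_integral z) (cbox a b) \<and> norm (z - (B - A)) < e"
        unfolding gg_def by auto
    qed simp
  qed
qed



lemma mono_lim_at_top:
  fixes F :: "real \<Rightarrow> real"
  assumes mono: "\<And>x y. 1 \<le> x \<Longrightarrow> x \<le> y \<Longrightarrow> F x \<le> F y"
    and bnd: "\<And>x. 1 \<le> x \<Longrightarrow> F x \<le> K"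
  obtains L where "(F \<longlongrightarrow> L) at_top"
proof -
  define f where "f x = F (max x 1)" for x
  have mf: "mono f" unfolding f_def mono_def by (auto intro!: mono)
  have "incseq (\<lambda>n. f (real n))" using mf by (auto simp: incseq_def mono_def)
  moreover have "\<forall>i. f (real i) \<le> K" by (auto simp: f_def intro!: bnd)
  ultimately obtain L where L: "(\<lambda>n. f (real n)) \<longlonglongrightarrow> L" by (rule incseq_convergent)
  have "(f \<longlongrightarrow> L) at_top" by (rule tendsto_at_topI_sequentially_real[OF mf L])
  moreover have "eventually (\<lambda>x. f x = F x) at_top"
    using eventually_ge_at_top[of "1::real"] by eventually_elim (auto simp: f_def max_def)
  ultimately have "(F \<longlongrightarrow> L) at_top" by (rule Lim_transform_eventually)
  then show ?thesis by (rule that)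
qed

lemma A0:
  fixes c :: real assumes c: "c > 0"
  shows "((\<lambda>x. 1 / (x^2 + c^2)) has_integral pi / (2 * c)) {0<..}"
proof -
  have d: "((\<lambda>x. arctan (x / c) / c) has_real_derivative 1 / (x^2 + c^2)) (at x)" for x
  proof -
    have D1: "((\<lambda>x. arctan (x / c) / c) has_real_derivative inverse (1 + (x / c)\<^sup>2) * (1 / c) / c) (at x)"
      using c by (auto intro!: derivative_eq_intros)
    have p: "0 < x^2 + c^2" by (intro add_nonneg_pos) (use c in auto)
    have "inverse (1 + (x / c)\<^sup>2) * (1 / c) / c = 1 / (c^2 * (1 + (x / c)\<^sup>2))"
      by (simp add: inverse_eq_divide power2_eq_square)
    also have "c^2 * (1 + (x / c)\<^sup>2) = x^2 + c^2"
      using c by (simp add: field_simps power2_eq_square)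
    finally have "inverse (1 + (x / c)\<^sup>2) * (1 / c) / c = 1 / (x^2 + c^2)" .
    with D1 show ?thesis by simp
  qed
  have l0: "((\<lambda>x. arctan (x / c) / c) \<longlongrightarrow> 0) (at_right 0)"
  proof -
    have "((\<lambda>x. arctan (x / c) / c) \<longlongrightarrow> arctan (0 / c) / c) (at_right 0)"
      using c by (intro tendsto_intros) auto
    then show ?thesis by simp
  qed
  have "LIM x at_top. inverse c * x :> at_top"
    by (rule filterlim_tendsto_pos_mult_at_top[OF tendsto_const]) (use c in \<open>auto intro: filterlim_ident\<close>)
  then have "LIM x at_top. x / c :> at_top" by (simp add: field_simps)
  then have "((\<lambda>x. arctan (x / c)) \<longlongrightarrow> pi / 2) at_top"
    by (rule filterlim_compose[OF tendsto_arctan_at_top])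
  then have l1: "((\<lambda>x. arctan (x / c) / c) \<longlongrightarrow> pi / 2 / c) at_top"
    by (intro tendsto_intros) (use c in auto)
  have "((\<lambda>x. 1 / (x^2 + c^2)) has_integral (pi / 2 / c - 0)) {0<..}"
    by (rule improper_ftc[OF d l0 l1])
  then show ?thesis by simp
qed



lemma d_arctan:
  fixes c :: real assumes c: "c > 0"
  shows "((\<lambda>x. arctan (x / c) / c) has_real_derivative 1 / (x^2 + c^2)) (at x)"
proof -
  have D1: "((\<lambda>x. arctan (x / c) / c) has_real_derivative inverse (1 + (x / c)\<^sup>2) * (1 / c) / c) (at x)"
    using c by (auto intro!: derivative_eq_intros)
  have "inverse (1 + (x / c)\<^sup>2) * (1 / c) / c = 1 / (c^2 * (1 + (x / c)\<^sup>2))"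
    by (simp add: inverse_eq_divide power2_eq_square)
  also have "c^2 * (1 + (x / c)\<^sup>2) = x^2 + c^2"
    using c by (simp add: field_simps power2_eq_square)
  finally have "inverse (1 + (x / c)\<^sup>2) * (1 / c) / c = 1 / (x^2 + c^2)" .
  with D1 show ?thesis by simp
qed

lemma L0:
  fixes c :: real assumes c: "c > 0"
  shows "((\<lambda>x. ln x / (x^2 + c^2)) has_integral pi * ln c / (2 * c)) {0<..}"
proof -
  define u where "u x = ln x / (x^2 + c^2)" for x :: real
  have pos: "0 < x^2 + c^2" for x :: real by (intro add_nonneg_pos) (use c in auto)
  have "\<exists>F. \<forall>x :: real. ereal 0 < ereal x \<longrightarrow> ereal x < \<infinity> \<longrightarrow> (F has_vector_derivative u x) (at x)"
  proof (rule einterval_antiderivative)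
    show "ereal 0 < \<infinity>" by simp
    fix x :: real assume "ereal 0 < ereal x" "ereal x < \<infinity>"
    then have "x > 0" by simp
    then show "isCont u x" unfolding u_def using pos[of x]
      by (auto intro!: continuous_intros)
  qed
  then obtain F where F: "\<And>x. x > 0 \<Longrightarrow> (F has_real_derivative u x) (at x)"
    by (auto simp: has_real_derivative_iff_has_vector_derivative)
  have mono: "F x \<le> F y" if "1 \<le> x" "x \<le> y" for x y
  proof (rule DERIV_nonneg_imp_nondecreasing[OF \<open>x \<le> y\<close>])
    fix t assume "x \<le> t" "t \<le> y"
    then have "t \<ge> 1" using that by simp
    then show "\<exists>y. (F has_real_derivative y) (at t) \<and> 0 \<le> y"
      using F[of t] pos[of t] by (auto simp: u_def intro!: exI[of _ "u t"])
  qed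
  define W where "W x = - (ln x + 1) / x" for x :: real
  have dW: "(W has_real_derivative ln x / x^2) (at x)" if "x > 0" for x
  proof -
    have "(W has_real_derivative (- (inverse x) * x - (- (ln x + 1))) / (x * x)) (at x)"
      unfolding W_def using that by (auto intro!: derivative_eq_intros)
    moreover have "(- (inverse x) * x - (- (ln x + 1))) / (x * x) = ln x / x^2"
      using that by (simp add: field_simps power2_eq_square)
    ultimately show ?thesis by simp
  qed
  have bnd: "F x \<le> F 1 + 1" if "1 \<le> x" for x
  proof -
    have "(\<lambda>t. F t - W t) 1 \<ge> (\<lambda>t. F t - W t) x"
    proof (rule DERIV_nonpos_imp_nonincreasing[OF \<open>1 \<le> x\<close>])
      fix t :: real assume "1 \<le> t" "t \<le> x"
      then have t: "t > 0" "ln t \<ge> 0" by auto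
      have "ln t / (t^2 + c^2) \<le> ln t / t^2"
        using t c pos[of t] by (intro divide_left_mono) (auto intro!: mult_pos_pos)
      then show "\<exists>y. ((\<lambda>t. F t - W t) has_real_derivative y) (at t) \<and> y \<le> 0"
        using t by (intro exI[of _ "u t - ln t / t^2"]) (auto simp: u_def intro!: derivative_eq_intros F dW)
    qed
    moreover have "W x \<le> 0" using that ln_ge_zero[OF that] unfolding W_def
      by (intro divide_nonpos_pos) linarith+
    moreover have "W 1 = -1" by (simp add: W_def)
    ultimately show ?thesis by simp
  qed
  obtain L where L: "(F \<longlongrightarrow> L) at_top"
    using mono_lim_at_top[of F "F 1 + 1"] mono bnd by blast
  define Q where "Q x = F x - F (c^2 / x) - 2 * ln c * (arctan (x / c) / c)" for x
  have dQ: "(Q has_real_derivative 0) (at x)" if x: "x > 0" for x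
  proof -
    have cx: "c^2 / x > 0" using x c by simp
    have dinv: "((\<lambda>x. c^2 / x) has_real_derivative - (c^2) / x^2) (at x)"
      using x by (auto intro!: derivative_eq_intros simp: field_simps power2_eq_square)
    have d1: "((\<lambda>x. F (c^2 / x)) has_real_derivative u (c^2 / x) * (- (c^2) / x^2)) (at x)"
      by (rule DERIV_chain2[OF F[OF cx] dinv])
    have "(Q has_real_derivative (u x - u (c^2 / x) * (- (c^2) / x^2) - 2 * ln c * (1 / (x^2 + c^2)))) (at x)"
      unfolding Q_def
      by (intro DERIV_diff F x d1 DERIV_cmult[OF d_arctan[OF c]])
    moreover have e: "u (c^2 / x) * (c^2 / x^2) = (2 * ln c - ln x) / (x^2 + c^2)"
    proof -
      have den: "(c^2 / x)^2 + c^2 = (x^2 + c^2) * (c^2 / x^2)"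
        using x c by (simp add: field_simps power2_eq_square)
      have nz: "c^2 / x^2 \<noteq> 0" using x c by simp
      have "u (c^2 / x) * (c^2 / x^2) = ln (c^2 / x) / ((x^2 + c^2) * (c^2 / x^2)) * (c^2 / x^2)"
        unfolding u_def den ..
      also have "\<dots> = ln (c^2 / x) / (x^2 + c^2)"
        using nz by simp
      also have "ln (c^2 / x) = 2 * ln c - ln x"
        using x c by (simp add: ln_div ln_realpow)
      finally show ?thesis .
    qed
    moreover have "u x - u (c^2 / x) * (- (c^2) / x^2) - 2 * ln c * (1 / (x^2 + c^2)) = 0"
    proof -
      have "u x - u (c^2 / x) * (- (c^2) / x^2) - 2 * ln c * (1 / (x^2 + c^2))
          = u x + u (c^2 / x) * (c^2 / x^2) - 2 * ln c / (x^2 + c^2)" by simp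
      also have "\<dots> = (ln x + (2 * ln c - ln x) - 2 * ln c) / (x^2 + c^2)"
        unfolding e by (simp add: u_def add_divide_distrib diff_divide_distrib)
      also have "\<dots> = 0" by simp
      finally show ?thesis .
    qed
    ultimately show ?thesis by simp
  qed
  have "\<exists>k. \<forall>x\<in>{0<..}. Q x = k"
    by (rule has_field_derivative_zero_constant) (auto intro: has_field_derivative_at_within dQ)
  then obtain k where k: "\<And>x. x > 0 \<Longrightarrow> Q x = k" by auto
  have kval: "k = - 2 * ln c * (pi / 4) / c"
  proof -
    have "Q c = - 2 * ln c * (pi / 4) / c"
      using c by (simp add: Q_def power2_eq_square arctan_one)
    then show ?thesis using k[OF c] by simp
  qed
  have rel: "F y = F (c^2 / y) - 2 * ln c * (arctan (c / y) / c) - k" if y: "y > 0" for y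
  proof -
    have "Q (c^2 / y) = k" using k y c by simp
    moreover have "c^2 / (c^2 / y) = y" "c^2 / y / c = c / y"
      using y c by (simp_all add: field_simps power2_eq_square)
    ultimately show ?thesis unfolding Q_def by simp
  qed
  have inv1: "LIM y at_right 0. c^2 * inverse y :> at_top"
    by (rule filterlim_tendsto_pos_mult_at_top[OF tendsto_const _ filterlim_inverse_at_top_right])
       (use c in simp)
  have inv2: "LIM y at_right 0. c * inverse y :> at_top"
    by (rule filterlim_tendsto_pos_mult_at_top[OF tendsto_const _ filterlim_inverse_at_top_right])
       (use c in simp)
  have "((\<lambda>y. F (c^2 * inverse y)) \<longlongrightarrow> L) (at_right 0)"
    by (rule filterlim_compose[OF L inv1])
  moreover have "((\<lambda>y. arctan (c * inverse y)) \<longlongrightarrow> pi / 2) (at_right 0)"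
    by (rule filterlim_compose[OF tendsto_arctan_at_top inv2])
  ultimately have "((\<lambda>y. F (c^2 * inverse y) - 2 * ln c * (arctan (c * inverse y) / c) - k)
      \<longlongrightarrow> L - 2 * ln c * (pi / 2 / c) - k) (at_right 0)"
    using c by (intro tendsto_intros) auto
  moreover have "eventually (\<lambda>y. F (c^2 * inverse y) - 2 * ln c * (arctan (c * inverse y) / c) - k = F y) (at_right 0)"
    using eventually_at_right_less[of "0::real"]
    by eventually_elim (use rel in \<open>auto simp: divide_inverse\<close>)
  ultimately have A: "(F \<longlongrightarrow> L - 2 * ln c * (pi / 2 / c) - k) (at_right 0)"
    by (rule Lim_transform_eventually)
  have "(u has_integral (L - (L - 2 * ln c * (pi / 2 / c) - k))) {0<..}"
    by (rule improper_ftc[OF F A L])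
  moreover have "L - (L - 2 * ln c * (pi / 2 / c) - k) = pi * ln c / (2 * c)"
    using c by (simp add: kval field_simps)
  ultimately show ?thesis by (simp add: u_def[abs_def])
qed



lemma dG: 
  fixes c x :: real assumes "c > 0"
  shows "((\<lambda>x. x / (x^2+c^2)^(n+1)) has_real_derivative (2*(n+1)*c^2/(x^2+c^2)^(n+2) - (2*n+1)/(x^2+c^2)^(n+1))) (at x)"
proof -
  have p: "x^2 + c^2 > 0" by (intro add_nonneg_pos) (use assms in auto)
  define d where "d = x^2 + c^2"
  define D where "D = d ^ n"
  have dp: "d > 0" "D > 0" using p by (auto simp: d_def D_def)
  show ?thesis
    apply (rule derivative_eq_intros refl)+
    apply (rule power_not_zero) using p apply linarith
    apply (simp only: d_def[symmetric])
    apply (simp add: power_Suc D_def[symmetric])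
    using dp apply (simp add: field_simps)
    apply (simp add: d_def power2_eq_square algebra_simps)
    done
qed

lemma G_lim0:
  fixes c :: real assumes c: "c > 0"
  shows "((\<lambda>x. x / (x^2+c^2)^(n+1)) \<longlongrightarrow> 0) (at_right 0)"
proof -
  have "((\<lambda>x. x / (x^2+c^2)^(n+1)) \<longlongrightarrow> 0 / (0^2+c^2)^(n+1)) (at_right 0)"
    using c by (intro tendsto_intros) auto
  then show ?thesis by simp
qed

lemma aux_div_le:
  fixes x D :: real
  assumes "0 < x" "0 < D" "x * x \<le> D"
  shows "x / D \<le> 1 / x"
  using assms by (simp add: field_simps)

lemma G_bound:
  fixes c x :: real assumes c: "c > 0" and x: "x \<ge> 1"
  shows "0 \<le> x / (x^2+c^2)^(n+1)" "x / (x^2+c^2)^(n+1) \<le> 1 / x"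
proof -
  have p: "x^2 + c^2 > 0" by (intro add_nonneg_pos) (use assms in auto)
  show "0 \<le> x / (x^2+c^2)^(n+1)" using x p by simp
  have "1 \<le> x^2 + c^2" using x by (smt (verit) one_le_power zero_le_power2)
  then have "(x^2+c^2)^1 \<le> (x^2+c^2)^(n+1)" by (intro power_increasing) auto
  then have "x * x \<le> (x^2+c^2)^(n+1)" by (simp add: power2_eq_square) (smt (verit) zero_le_power2 power2_eq_square)
  moreover have "0 < (x^2+c^2)^(n+1)" using p by simp
  ultimately show "x / (x^2+c^2)^(n+1) \<le> 1 / x" using x
    by (intro aux_div_le) auto
qed

lemma G_limtop:
  fixes c :: real assumes c: "c > 0"
  shows "((\<lambda>x. x / (x^2+c^2)^(n+1)) \<longlongrightarrow> 0) at_top"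
proof (rule tendsto_sandwich[of "\<lambda>_. 0" _ _ "\<lambda>x. 1 / x"])
  show "\<forall>\<^sub>F x in at_top. 0 \<le> x / (x^2+c^2)^(n+1)"
    using eventually_ge_at_top[of "1::real"] by eventually_elim (use G_bound c in blast)
  show "\<forall>\<^sub>F x in at_top. x / (x^2+c^2)^(n+1) \<le> 1 / x"
    using eventually_ge_at_top[of "1::real"] by eventually_elim (use G_bound c in blast)
  show "((\<lambda>x::real. 1 / x) \<longlongrightarrow> 0) at_top" by real_asymp
qed simp

lemma K_lim0:
  fixes c :: real assumes c: "c > 0"
  shows "((\<lambda>x. ln x * (x / (x^2+c^2)^(n+1))) \<longlongrightarrow> 0) (at_right 0)"
proof -
  have xl: "((\<lambda>x::real. x * ln x) \<longlongrightarrow> 0) (at_right 0)" by real_asymp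
  have "((\<lambda>x. (x * ln x) * (1 / (x^2+c^2)^(n+1))) \<longlongrightarrow> 0 * (1 / (0^2+c^2)^(n+1))) (at_right 0)"
    using c by (intro tendsto_intros xl) auto
  moreover have "(\<lambda>x. (x * ln x) * (1 / (x^2+c^2)^(n+1))) = (\<lambda>x. ln x * (x / (x^2+c^2)^(n+1)))"
    by (rule ext) simp
  ultimately show ?thesis by simp
qed

lemma K_limtop:
  fixes c :: real assumes c: "c > 0"
  shows "((\<lambda>x. ln x * (x / (x^2+c^2)^(n+1))) \<longlongrightarrow> 0) at_top"
proof (rule tendsto_sandwich[of "\<lambda>_. 0" _ _ "\<lambda>x. ln x * (1 / x)"])
  show "\<forall>\<^sub>F x in at_top. 0 \<le> ln x * (x / (x^2+c^2)^(n+1))"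
    using eventually_ge_at_top[of "1::real"] by eventually_elim (use G_bound c in auto)
  show "\<forall>\<^sub>F x in at_top. ln x * (x / (x^2+c^2)^(n+1)) \<le> ln x * (1 / x)"
    using eventually_ge_at_top[of "1::real"]
    by eventually_elim (rule mult_left_mono[OF G_bound(2)[OF c]], auto)
  show "((\<lambda>x::real. ln x * (1 / x)) \<longlongrightarrow> 0) at_top" by real_asymp
qed simp

definition al :: "nat \<Rightarrow> real" where
  "al n = pi / 2 * real ((2*n) choose n) / 4^n"

lemma choose_central_Suc: "(n+1) * ((2*n+2) choose (n+1)) = 2 * (2*n+1) * ((2*n) choose n)"
proof -
  have e1: "Suc n * (Suc (Suc (2*n)) choose Suc n) = Suc (Suc (2*n)) * (Suc (2*n) choose n)"
    using binomial_absorption[of n "Suc (Suc (2*n))"] by simp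
  have e2: "Suc n * (Suc (2*n) choose Suc n) = Suc (2*n) * ((2*n) choose n)"
    using binomial_absorption[of n "Suc (2*n)"] by simp
  have e3: "Suc (2*n) choose n = Suc (2*n) choose Suc n"
    using binomial_symmetric[of n "Suc (2*n)"] by (simp add: Suc_diff_le)
  have "(n+1) * ((2*n+2) choose (n+1)) = 2 * (Suc n * (Suc (2*n) choose Suc n))"
    using e1 e3 by simp
  also have "\<dots> = 2 * (2*n+1) * ((2*n) choose n)" using e2 by simp
  finally show ?thesis .
qed

lemma al_Suc: "al (Suc n) * (2 * (real n + 1)) = al n * (2 * real n + 1)"
proof -
  have "real (n+1) * real ((2*n+2) choose (n+1)) = 2 * (2 * real n + 1) * real ((2*n) choose n)"
    using arg_cong[OF choose_central_Suc, of real] by (simp only: of_nat_mult of_nat_add of_nat_numeral of_nat_1)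
  then have h: "real ((2*n+2) choose (n+1)) = 2 * (2 * real n + 1) * real ((2*n) choose n) / (real n + 1)"
    by (simp add: field_simps)
  have e: "2 * (n+1) = 2*n+2" "Suc n = n + 1" by simp_all
  have a1: "al (Suc n) = pi / 2 * real ((2*n+2) choose (n+1)) / 4^(n+1)"
    by (simp only: al_def e)
  have gen0: "pi / 2 * (2 * (2 * m + 1) * B / p) / (4 * q) * (2 * p) = pi / 2 * B / q * (2 * m + 1)"
    if "q > 0" "p > 0" for q m B p :: real
    using that by (simp add: field_simps)
  have gen: "pi / 2 * (2 * (2 * m + 1) * B / (m + 1)) / (4 * q) * (2 * (m + 1)) = pi / 2 * B / q * (2 * m + 1)"
    if "q > 0" "m \<ge> 0" for q m B :: real
    using gen0[of q "m+1" m B] that by simp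
  have pw: "(4::real)^(n+1) = 4 * 4^n" by simp
  have "al (Suc n) * (2 * (real n + 1)) = pi / 2 * (2 * (2 * real n + 1) * real ((2*n) choose n) / (real n + 1)) / (4 * 4^n) * (2 * (real n + 1))"
    unfolding a1 h pw ..
  also have "\<dots> = pi / 2 * real ((2*n) choose n) / 4^n * (2 * real n + 1)"
    by (rule gen) simp_all
  also have "\<dots> = al n * (2 * real n + 1)" by (simp add: al_def)
  finally show ?thesis .
qed



lemma valA:
  fixes a a' m C c :: real
  assumes "a' * (2 * (m + 1)) = a * (2 * m + 1)" "m \<ge> 0" "C > 0" "c > 0"
  shows "inverse (2 * (m + 1) * c^2) * (0 + (2 * m + 1) * (a / C)) = a' / (C * c^2)"
proof -
  have a': "a' = a * (2 * m + 1) / (2 * (m + 1))" using assms(1,2) by (simp add: field_simps)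
  show ?thesis unfolding a' using assms(2-4) by (simp add: field_simps)
qed

lemma valL0:
  fixes a a' p q C c l hh :: real
  assumes "a' = a * q / (2 * p)" "p > 0" "q > 0" "C > 0" "c > 0"
  shows "inverse (2 * p * c^2) * (0 - a / C + q * (a * (l - hh) / C))
         = a' * (l - (hh + 1 / q)) / (C * c^2)"
  unfolding assms(1) using assms(2-5) by (simp add: field_simps)

lemma valL:
  fixes a a' m C c l hh :: real
  assumes "a' * (2 * (m + 1)) = a * (2 * m + 1)" "m \<ge> 0" "C > 0" "c > 0"
  shows "inverse (2 * (m + 1) * c^2) * (0 - a / C + (2 * m + 1) * (a * (l - hh) / C))
         = a' * (l - (hh + 1 / (2 * m + 1))) / (C * c^2)"
proof (rule valL0)
  show "a' = a * (2 * m + 1) / (2 * (m + 1))" using assms(1,2) by (simp add: field_simps)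
qed (use assms in auto)

lemma oddharm_Suc: "oddharm (Suc n) = oddharm n + 1 / (2 * real n + 1)"
  by (simp add: oddharm_def)

lemma main_int:
  fixes c :: real assumes c: "c > 0"
  shows "((\<lambda>x. 1 / (x^2+c^2)^(n+1)) has_integral al n / c^(2*n+1)) {0<..} \<and>
         ((\<lambda>x. ln x / (x^2+c^2)^(n+1)) has_integral al n * (ln c - oddharm n) / c^(2*n+1)) {0<..}"
proof (induction n)
  case 0
  have "al 0 / c^(2*0+1) = pi / (2 * c)" "al 0 * (ln c - oddharm 0) / c^(2*0+1) = pi * ln c / (2 * c)"
    by (simp_all add: al_def oddharm_def)
  then show ?case using A0[OF c] L0[OF c] by simp
next
  case (Suc n)
  from Suc.IH have IA: "((\<lambda>x. 1 / (x^2+c^2)^(n+1)) has_integral al n / c^(2*n+1)) {0<..}"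
    and IL: "((\<lambda>x. ln x / (x^2+c^2)^(n+1)) has_integral al n * (ln c - oddharm n) / c^(2*n+1)) {0<..}"
    by auto
  have pos: "0 < x^2 + c^2" for x :: real by (intro add_nonneg_pos) (use c in auto)
  define g where "g x = 2*(real n+1)*c^2/(x^2+c^2)^(n+2) - (2*real n+1)/(x^2+c^2)^(n+1)" for x :: real
  define kk where "kk x = ln x * g x + 1 / (x^2+c^2)^(n+1)" for x :: real
  have "(g has_integral (0 - 0)) {0<..}"
  proof (rule improper_ftc[where G = "\<lambda>x. x / (x^2+c^2)^(n+1)"])
    show "((\<lambda>x. x / (x^2+c^2)^(n+1)) has_real_derivative g x) (at x)" for x
      unfolding g_def by (rule dG[OF c])
  qed (rule G_lim0[OF c], rule G_limtop[OF c])
  then have iG: "(g has_integral 0) {0<..}" by simp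
  have "(kk has_integral (0 - 0)) {0<..}"
  proof (rule improper_ftc[where G = "\<lambda>x. ln x * (x / (x^2+c^2)^(n+1))"])
    fix x :: real assume x: "x > 0"
    have dg: "((\<lambda>x. x / (x^2+c^2)^(n+1)) has_real_derivative g x) (at x)"
      unfolding g_def by (rule dG[OF c])
    have "((\<lambda>x. ln x * (x / (x^2+c^2)^(n+1))) has_real_derivative
           inverse x * (x / (x^2+c^2)^(n+1)) + g x * ln x) (at x)"
      by (rule DERIV_mult[OF DERIV_ln[OF x] dg])
    moreover have "inverse x * (x / (x^2+c^2)^(n+1)) + g x * ln x = kk x"
      using x by (simp add: kk_def)
    ultimately show "((\<lambda>x. ln x * (x / (x^2+c^2)^(n+1))) has_real_derivative kk x) (at x)" by simp
  qed (rule K_lim0[OF c], rule K_limtop[OF c])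
  then have iK: "(kk has_integral 0) {0<..}" by simp
  define K where "K = 2 * (real n + 1) * c^2"
  have Kp: "K > 0" using c by (simp add: K_def)
  have cpow: "c^(2 * Suc n + 1) = c^(2*n+1) * c^2" by (simp add: power_add[symmetric])
  have Cp: "c^(2*n+1) > 0" using c by simp
  have "((\<lambda>x. inverse K * (g x + (2*real n+1) * (1 / (x^2+c^2)^(n+1)))) has_integral
          inverse K * (0 + (2*real n+1) * (al n / c^(2*n+1)))) {0<..}"
    by (intro has_integral_mult_right has_integral_add iG IA)
  moreover have "inverse K * (g x + (2*real n+1) * (1 / (x^2+c^2)^(n+1))) = 1 / (x^2+c^2)^(Suc n + 1)" for x
  proof -
    have "g x + (2*real n+1) * (1 / (x^2+c^2)^(n+1)) = K / (x^2+c^2)^(n+2)"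
      by (simp add: g_def K_def)
    then show ?thesis using Kp by simp
  qed
  moreover have "inverse K * (0 + (2*real n+1) * (al n / c^(2*n+1))) = al (Suc n) / c^(2 * Suc n + 1)"
    unfolding cpow K_def by (rule valA[OF al_Suc]) (use c Cp in auto)
  ultimately have RA: "((\<lambda>x. 1 / (x^2+c^2)^(Suc n + 1)) has_integral al (Suc n) / c^(2 * Suc n + 1)) {0<..}"
    by simp
  have "((\<lambda>x. inverse K * (kk x - 1 / (x^2+c^2)^(n+1) + (2*real n+1) * (ln x / (x^2+c^2)^(n+1)))) has_integral
          inverse K * (0 - al n / c^(2*n+1) + (2*real n+1) * (al n * (ln c - oddharm n) / c^(2*n+1)))) {0<..}"
    by (intro has_integral_mult_right has_integral_add has_integral_diff iK IA IL)
  moreover have "inverse K * (kk x - 1 / (x^2+c^2)^(n+1) + (2*real n+1) * (ln x / (x^2+c^2)^(n+1)))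
       = ln x / (x^2+c^2)^(Suc n + 1)" for x
  proof -
    have "kk x - 1 / (x^2+c^2)^(n+1) + (2*real n+1) * (ln x / (x^2+c^2)^(n+1)) = ln x * (K / (x^2+c^2)^(n+2))"
      by (simp add: kk_def g_def K_def algebra_simps)
    then show ?thesis using Kp by simp
  qed
  moreover have "inverse K * (0 - al n / c^(2*n+1) + (2*real n+1) * (al n * (ln c - oddharm n) / c^(2*n+1)))
      = al (Suc n) * (ln c - oddharm (Suc n)) / c^(2 * Suc n + 1)"
    unfolding cpow K_def oddharm_Suc by (rule valL[OF al_Suc]) (use c Cp in auto)
  ultimately have RL: "((\<lambda>x. ln x / (x^2+c^2)^(Suc n + 1)) has_integral al (Suc n) * (ln c - oddharm (Suc n)) / c^(2 * Suc n + 1)) {0<..}"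
    by simp
  show ?case using RA RL by blast
qed



lemma lucas_closed: "real (lucas n) = golden ^ n + ((1 - sqrt 5) / 2) ^ n"
proof (induction n rule: lucas.induct)
  case 1 then show ?case by simp
next
  case 2 then show ?case by (simp add: golden_def field_simps)
next
  case (3 n)
  define p where "p = golden"
  define q where "q = (1 - sqrt 5) / 2"
  have p2: "p^2 = p + 1" by (simp add: p_def golden_def field_simps power2_eq_square)
  have q2: "q^2 = q + 1" by (simp add: q_def field_simps power2_eq_square)
  have "real (lucas (Suc (Suc n))) = real (lucas (Suc n)) + real (lucas n)" by simp
  also have "\<dots> = p^n * (p + 1) + q^n * (q + 1)"
    using 3 by (simp add: p_def[symmetric] q_def[symmetric] algebra_simps)
  also have "\<dots> = p ^ Suc (Suc n) + q ^ Suc (Suc n)"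
    by (simp add: p2[symmetric] q2[symmetric] power2_eq_square)
  finally show ?case by (simp add: p_def q_def)
qed

lemma fib_closed: "real (fib n) = (golden ^ n - ((1 - sqrt 5) / 2) ^ n) / sqrt 5"
  using fib_closed_form[of n] by (simp add: golden_def)

lemma binom_sq:
  fixes x a :: real
  shows "(\<Sum>j=0..n+1. real (n+1 choose j) * (a^2)^(n+1-j) * x^(2*j)) = (x^2 + a^2)^(n+1)"
proof -
  have "(x^2+a^2)^(n+1) = (\<Sum>k\<in>{0..n+1}. real (n+1 choose k) * (x^2)^k * (a^2)^(n+1-k))"
    by (simp only: binomial_ring atMost_atLeast0)
  also have "\<dots> = (\<Sum>j=0..n+1. real (n+1 choose j) * (a^2)^(n+1-j) * x^(2*j))"
    by (rule sum.cong) (simp_all add: power_mult[symmetric] mult_ac)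
  finally show ?thesis ..
qed



theorem theorem26:
  fixes m n :: nat
  assumes "m \<ge> 1"
  shows "((\<lambda>x::real. (\<Sum>j=0..n+1. real (n+1 choose j) * real (lucas (4*m*(n+1-j))) * x^(2*j))
             / (x^4 + real (lucas (4*m)) * x^2 + 1)^(n+1) * ln x)
          has_integral
          (- real ((2*n) choose n) * pi / 2^(2*n+1)
             * (2 * real m * sqrt 5 * real (fib (2*m*(2*n+1))) * ln golden
                + oddharm n * real (lucas (2*m*(2*n+1)))))) {0<..}
       \<and>
         ((\<lambda>x::real. (\<Sum>j=0..n+1. real (n+1 choose j) * real (fib (4*m*(n+1-j))) * x^(2*j))
             / (x^4 + real (lucas (4*m)) * x^2 + 1)^(n+1) * ln x)
          has_integral
          (- real ((2*n) choose n) * pi / 2^(2*n+1)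
             * (2 * real m / sqrt 5 * real (lucas (2*m*(2*n+1))) * ln golden
                + oddharm n * real (fib (2*m*(2*n+1)))))) {0<..}"
proof -
  define p where "p = golden"
  define q where "q = (1 - sqrt 5) / 2"
  have s5: "sqrt 5 * sqrt 5 = (5::real)" by simp
  have s5p: "sqrt 5 > (0::real)" by simp
  have pq: "p * q = -1" unfolding p_def q_def golden_def
    by (simp add: field_simps s5)
  have p_pos: "p > 0" unfolding p_def golden_def by (simp add: add_pos_pos)
  define a where "a = p^(2*m)"
  define b where "b = q^(2*m)"
  have a_pos: "a > 0" using p_pos by (simp add: a_def)
  have ab: "a * b = 1"
  proof -
    have "a * b = (p * q)^(2*m)" by (simp add: a_def b_def power_mult_distrib)
    also have "\<dots> = 1" by (simp add: pq power_mult)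
    finally show ?thesis .
  qed
  have b_eq: "b = 1 / a" using ab a_pos by (simp add: field_simps)
  have b_pos: "b > 0" using a_pos b_eq by simp
  have pw: "golden ^ (4*m*k) = (a^2)^k" "((1 - sqrt 5)/2) ^ (4*m*k) = (b^2)^k" for k
    by (simp_all add: a_def b_def p_def q_def power_mult[symmetric] mult_ac)
  have pw2: "golden ^ (2*m*(2*n+1)) = a^(2*n+1)" "((1 - sqrt 5)/2) ^ (2*m*(2*n+1)) = b^(2*n+1)"
    by (simp_all add: a_def b_def p_def q_def power_mult[symmetric] mult_ac power_add)
  have Lk: "real (lucas (4*m*k)) = (a^2)^k + (b^2)^k" for k
    by (simp only: lucas_closed pw)
  have Fk: "real (fib (4*m*k)) = ((a^2)^k - (b^2)^k) / sqrt 5" for k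
    by (simp only: fib_closed pw)
  have L4: "real (lucas (4*m)) = a^2 + b^2" using Lk[of 1] by simp
  have LN: "real (lucas (2*m*(2*n+1))) = a^(2*n+1) + b^(2*n+1)"
    by (simp only: lucas_closed pw2)
  have FN: "real (fib (2*m*(2*n+1))) = (a^(2*n+1) - b^(2*n+1)) / sqrt 5"
    by (simp only: fib_closed pw2)
  have den: "x^4 + real (lucas (4*m)) * x^2 + 1 = (x^2 + a^2) * (x^2 + b^2)" for x :: real
  proof -
    have "a^2 * b^2 = 1" using ab by (simp add: power_mult_distrib[symmetric])
    then show ?thesis unfolding L4 by (simp add: algebra_simps power2_eq_square power4_eq_xxxx)
  qed
  have numL: "(\<Sum>j=0..n+1. real (n+1 choose j) * real (lucas (4*m*(n+1-j))) * x^(2*j))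
      = (x^2 + a^2)^(n+1) + (x^2 + b^2)^(n+1)" for x :: real
    unfolding Lk binom_sq[where x=x and a=a and n=n, symmetric] binom_sq[where x=x and a=b and n=n, symmetric]
    by (simp add: sum.distrib[symmetric] algebra_simps)
  have numF: "(\<Sum>j=0..n+1. real (n+1 choose j) * real (fib (4*m*(n+1-j))) * x^(2*j))
      = ((x^2 + a^2)^(n+1) - (x^2 + b^2)^(n+1)) / sqrt 5" for x :: real
    unfolding Fk binom_sq[where x=x and a=a and n=n, symmetric] binom_sq[where x=x and a=b and n=n, symmetric]
    by (simp add: sum_subtractf[symmetric] sum_divide_distrib algebra_simps)
  have Pa: "(x^2 + a^2)^(n+1) > 0" for x :: real using a_pos by (intro zero_less_power add_nonneg_pos) auto
  have Pb: "(x^2 + b^2)^(n+1) > 0" for x :: real using b_pos by (intro zero_less_power add_nonneg_pos) auto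
  have f1: "(\<Sum>j=0..n+1. real (n+1 choose j) * real (lucas (4*m*(n+1-j))) * x^(2*j))
             / (x^4 + real (lucas (4*m)) * x^2 + 1)^(n+1) * ln x
         = ln x / (x^2 + b^2)^(n+1) + ln x / (x^2 + a^2)^(n+1)" for x :: real
    unfolding numL den power_mult_distrib using Pa[of x] Pb[of x]
    by (simp add: field_simps)
  have f2: "(\<Sum>j=0..n+1. real (n+1 choose j) * real (fib (4*m*(n+1-j))) * x^(2*j))
             / (x^4 + real (lucas (4*m)) * x^2 + 1)^(n+1) * ln x
         = (1 / sqrt 5) * (ln x / (x^2 + b^2)^(n+1) - ln x / (x^2 + a^2)^(n+1))" for x :: real
    unfolding numF den power_mult_distrib using Pa[of x] Pb[of x] s5p
    by (simp add: field_simps)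
  define I where "I c = al n * (ln c - oddharm n) / c^(2*n+1)" for c :: real
  have Ia: "((\<lambda>x. ln x / (x^2 + a^2)^(n+1)) has_integral I a) {0<..}"
    using main_int[OF a_pos, of n] by (simp add: I_def)
  have Ib: "((\<lambda>x. ln x / (x^2 + b^2)^(n+1)) has_integral I b) {0<..}"
    using main_int[OF b_pos, of n] by (simp add: I_def)
  have alv: "real ((2*n) choose n) * pi / 2^(2*n+1) = al n"
  proof -
    have "(2::real)^(2*n+1) = 2 * 4^n" by (simp add: power_mult)
    then show ?thesis by (simp add: al_def)
  qed
  have alv': "- real ((2*n) choose n) * pi / 2^(2*n+1) = - al n"
    using alv by (simp add: minus_divide_left)
  have lna: "ln a = 2 * real m * ln golden" using p_pos by (simp add: a_def p_def ln_realpow)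
  have lnb: "ln b = - ln a" using a_pos by (simp add: b_eq ln_div)
  have bN: "b^(2*n+1) = 1 / a^(2*n+1)" by (simp add: b_eq power_one_over)
  define A where "A = a^(2*n+1)"
  have A_pos: "A > 0" using a_pos by (simp add: A_def)
  have v1: "I b + I a = - real ((2*n) choose n) * pi / 2^(2*n+1)
             * (2 * real m * sqrt 5 * real (fib (2*m*(2*n+1))) * ln golden
                + oddharm n * real (lucas (2*m*(2*n+1))))"
    unfolding alv' LN FN I_def lnb bN A_def[symmetric] using A_pos s5p
    by (simp add: lna field_simps)
  have v2: "(1 / sqrt 5) * (I b - I a) = - real ((2*n) choose n) * pi / 2^(2*n+1)
             * (2 * real m / sqrt 5 * real (lucas (2*m*(2*n+1))) * ln golden
                + oddharm n * real (fib (2*m*(2*n+1))))"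
    unfolding alv' LN FN I_def lnb bN A_def[symmetric] using A_pos s5p
    by (simp add: lna field_simps)
  have R1: "((\<lambda>x. ln x / (x^2 + b^2)^(n+1) + ln x / (x^2 + a^2)^(n+1)) has_integral (I b + I a)) {0<..}"
    by (intro has_integral_add Ia Ib)
  have R2: "((\<lambda>x. (1 / sqrt 5) * (ln x / (x^2 + b^2)^(n+1) - ln x / (x^2 + a^2)^(n+1))) has_integral
             (1 / sqrt 5) * (I b - I a)) {0<..}"
    by (intro has_integral_mult_right has_integral_diff Ia Ib)
  show ?thesis
    using R1 R2 unfolding f1 f2 v1 v2 by blast
qed

end
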